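(* Let $\Lambda_n=\bigcup_{P\in\wp_n}P$ be the $n$-th stage of the construction, so $\Lambda=\bigcap_{n\ge1}\Lambda_n$. Then for every $\rho>0$, $$\mathcal N(\Lambda,\rho)=\inf_{n>0}\mathcal N(\Lambda_n,\rho).$$ Moreover, there exists $N_1>0$ such that $\mathcal N(\Lambda,\rho)=\mathcal N(\Lambda_n,\rho)$ for every $n>N_1$.
   Context: Let $M$ be a smooth $d$-dimensional Riemannian manifold, $N\subset M$ a compact domain with nonempty interior and piecewise smooth boundary, $U\supset N$ open. Let $g_1,\dots,g_s$ be injective $C^r$ maps ($r>1$) from $U$ into $N$ with $\|Dg\|:=\max_i\sup_x\|Dg_i(x)\|<1$, such that $g_i(U)$ are pairwise disjoint subsets of the interior of $N$ and $\partial g_i(N)\cap\partial N=\emptyset$; $\Lambda=\bigcap_{n\ge1}\bigcup_{(i_1,\dots,i_n)}g_{i_1}\circ\cdots\circ g_{i_n}(N)$, assumed volume irreducible. $\wp_n=\{g_{i_1}\circ\cdots\circ g_{i_n}(N)\}$ are the atoms of generation $n$. For a compact set $X$ and $\rho>0$, $\mathcal N(X,\rho)$ is the minimal cardinality of a finite covering of $X$ by open balls of radius $\rho$. *)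

theory Defs
  imports "HOL-Analysis.Analysis"
begin

definition cover_num :: "'a::metric_space set \<Rightarrow> real \<Rightarrow> nat" where
  "cover_num X \<rho> = Inf {card C | C. finite C \<and> X \<subseteq> (\<Union>c\<in>C. ball c \<rho>)}"

definition word_map :: "(nat \<Rightarrow> 'a \<Rightarrow> 'a) \<Rightarrow> nat list \<Rightarrow> 'a \<Rightarrow> 'a" where
  "word_map g w = foldr (\<lambda>i f. g i \<circ> f) w id"

definition atoms :: "(nat \<Rightarrow> 'a \<Rightarrow> 'a) \<Rightarrow> nat \<Rightarrow> 'a set \<Rightarrow> nat \<Rightarrow> 'a set set" where
  "atoms g s N n = {word_map g w ` N | w. length w = n \<and> set w \<subseteq> {..<s}}"

definition stage :: "(nat \<Rightarrow> 'a \<Rightarrow> 'a) \<Rightarrow> nat \<Rightarrow> 'a set \<Rightarrow> nat \<Rightarrow> 'a set" where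
  "stage g s N n = \<Union> (atoms g s N n)"

definition limit_set :: "(nat \<Rightarrow> 'a \<Rightarrow> 'a) \<Rightarrow> nat \<Rightarrow> 'a set \<Rightarrow> 'a set" where
  "limit_set g s N = (\<Inter>n\<in>{1..}. stage g s N n)"

end

theory Submission
  imports Defs
begin

lemma nest_eventually_in:
  fixes K :: "nat \<Rightarrow> 'a::metric_space set"
  assumes cK: "\<And>n. compact (K n)" and dec: "\<And>n. K (Suc n) \<subseteq> K n"
    and W: "open W" and sub: "(\<Inter>n\<in>{1..}. K n) \<subseteq> W"
  shows "\<exists>m. K m \<subseteq> W"
proof (rule ccontr)
  assume H: "\<not> (\<exists>m. K m \<subseteq> W)"
  have mono: "K m \<subseteq> K n" if "n \<le> m" for m n
    using lift_Suc_antimono_le[of K, OF dec that] .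
  have "(K 1 - W) \<inter> (\<Inter>i\<in>{1..}. K i) \<noteq> {}"
  proof (rule compact_imp_fip_image)
    show "compact (K 1 - W)" using cK W by (simp add: compact_diff)
    show "closed (K i)" for i using cK by (simp add: compact_imp_closed)
    fix I' assume fI: "finite I'" and I': "I' \<subseteq> {1::nat..}"
    define m where "m = Max (insert 1 I')"
    have m1: "1 \<le> m" and mi: "\<And>i. i \<in> I' \<Longrightarrow> i \<le> m"
      using fI by (auto simp: m_def)
    obtain x where x: "x \<in> K m" "x \<notin> W" using H by blast
    have "x \<in> K 1" using mono[OF m1] x by blast
    moreover have "x \<in> K i" if "i \<in> I'" for i using mono[OF mi[OF that]] x by blast
    ultimately show "(K 1 - W) \<inter> (\<Inter>i\<in>I'. K i) \<noteq> {}" using x by blast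
  qed
  then show False using sub by blast
qed

lemma cover_num_attained:
  fixes X :: "'a::metric_space set"
  assumes "compact X" and "\<rho> > 0"
  shows "\<exists>C. finite C \<and> X \<subseteq> (\<Union>c\<in>C. ball c \<rho>) \<and> card C = cover_num X \<rho>"
proof -
  obtain C where "C \<subseteq> X" "finite C" "X \<subseteq> (\<Union>c\<in>C. ball c \<rho>)"
    using compactE_image[OF assms(1), of X "\<lambda>c. ball c \<rho>"] assms(2) by force
  then have ne: "{card C | C. finite C \<and> X \<subseteq> (\<Union>c\<in>C. ball c \<rho>)} \<noteq> {}" by blast
  show ?thesis using Inf_nat_def1[OF ne] unfolding cover_num_def by auto
qed

lemma cover_num_mono:
  fixes X Y :: "'a::metric_space set"
  assumes "compact Y" "\<rho> > 0" "X \<subseteq> Y"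
  shows "cover_num X \<rho> \<le> cover_num Y \<rho>"
proof -
  obtain C where C: "finite C" "Y \<subseteq> (\<Union>c\<in>C. ball c \<rho>)" "card C = cover_num Y \<rho>"
    using cover_num_attained[OF assms(1,2)] by blast
  then have "card C \<in> {card C | C. finite C \<and> X \<subseteq> (\<Union>c\<in>C. ball c \<rho>)}" using assms(3) by blast
  then have "cover_num X \<rho> \<le> card C" unfolding cover_num_def by (rule cInf_lower) simp
  then show ?thesis using C by simp
qed

lemma word_map_Cons: "word_map g (i # w) = g i \<circ> word_map g w"
  by (simp add: word_map_def)

lemma word_map_snoc: "word_map g (w @ [i]) = word_map g w \<circ> g i"
proof (induction w)
  case Nil then show ?case by (simp add: word_map_def)
next
  case (Cons a w) then show ?case by (simp add: word_map_Cons comp_assoc)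
qed

theorem lemma5:
  fixes g :: "nat \<Rightarrow> 'a::metric_space \<Rightarrow> 'a" and s :: nat
    and N U :: "'a set" and \<rho> :: real
  assumes "compact N" and "interior N \<noteq> {}"
    and "open U" and "N \<subseteq> U"
    and "\<And>i. i < s \<Longrightarrow> continuous_on U (g i)"
    and "\<And>i. i < s \<Longrightarrow> inj_on (g i) U"
    and "\<And>i. i < s \<Longrightarrow> g i ` U \<subseteq> interior N"
    and "\<And>i j. i < s \<Longrightarrow> j < s \<Longrightarrow> i \<noteq> j \<Longrightarrow> g i ` U \<inter> g j ` U = {}"
    and "\<And>i. i < s \<Longrightarrow> frontier (g i ` N) \<inter> frontier N = {}"
    and "\<rho> > 0"
  shows "cover_num (limit_set g s N) \<rho> = (INF n\<in>{0<..}. cover_num (stage g s N n) \<rho>)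
    \<and> (\<exists>N1>0. \<forall>n>N1. cover_num (limit_set g s N) \<rho> = cover_num (stage g s N n) \<rho>)"
proof -
  have gN: "g i ` N \<subseteq> N" if "i < s" for i
    using assms(4) assms(7)[OF that] interior_subset by blast
  have wm: "continuous_on N (word_map g w) \<and> word_map g w ` N \<subseteq> N" if "set w \<subseteq> {..<s}" for w
    using that
  proof (induction w)
    case Nil then show ?case by (simp add: word_map_def continuous_on_id)
  next
    case (Cons i w)
    then have i: "i < s" and IH: "continuous_on N (word_map g w)" "word_map g w ` N \<subseteq> N" by auto
    have "continuous_on N (g i \<circ> word_map g w)"
      by (rule continuous_on_compose[OF IH(1)]) (meson IH(2) assms(4) assms(5)[OF i] continuous_on_subset order_trans)
    moreover have "(g i \<circ> word_map g w) ` N \<subseteq> N" using IH(2) gN[OF i] by (auto simp: image_comp[symmetric])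
    ultimately show ?case by (simp add: word_map_Cons)
  qed
  define K where "K n = stage g s N n" for n
  have atoms_eq: "atoms g s N n = (\<lambda>w. word_map g w ` N) ` {w. set w \<subseteq> {..<s} \<and> length w = n}" for n
    unfolding atoms_def by auto
  have cK: "compact (K n)" for n
    unfolding K_def stage_def atoms_eq
    by (rule compact_UN) (auto intro!: finite_lists_length_eq compact_continuous_image assms(1) dest: wm)
  have dec: "K (Suc n) \<subseteq> K n" for n
  proof
    fix x assume "x \<in> K (Suc n)"
    then obtain w where w: "set w \<subseteq> {..<s}" "length w = Suc n" "x \<in> word_map g w ` N"
      unfolding K_def stage_def atoms_def by auto
    then obtain v i where vi: "w = v @ [i]" by (metis length_Suc_conv_rev)
    with w have "set v \<subseteq> {..<s}" "length v = n" "i < s" by auto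
    moreover have "x \<in> word_map g v ` N" using w(3) vi gN[OF \<open>i < s\<close>]
      by (auto simp: word_map_snoc)
    ultimately show "x \<in> K n" unfolding K_def stage_def atoms_def by auto
  qed
  have mono: "K m \<subseteq> K n" if "n \<le> m" for m n
    using lift_Suc_antimono_le[of K, OF dec that] .
  define L where "L = limit_set g s N"
  have L: "L = (\<Inter>n\<in>{1..}. K n)" unfolding L_def limit_set_def K_def by simp
  have cL: "compact L"
  proof -
    have "closed L" unfolding L by (rule closed_INT) (auto intro: cK compact_imp_closed)
    moreover have "L = K 1 \<inter> L" unfolding L by auto
    ultimately show ?thesis by (metis compact_Int_closed cK)
  qed
  obtain C where C: "finite C" "L \<subseteq> (\<Union>c\<in>C. ball c \<rho>)" "card C = cover_num L \<rho>"
    using cover_num_attained[OF cL assms(10)] by blast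
  obtain m where m: "K m \<subseteq> (\<Union>c\<in>C. ball c \<rho>)"
    using nest_eventually_in[OF cK dec _ C(2)[unfolded L]] by auto
  have le: "cover_num L \<rho> \<le> cover_num (K n) \<rho>" if "n > 0" for n
  proof -
    have "L \<subseteq> K n" unfolding L using that by (intro INT_lower) auto
    then show ?thesis by (rule cover_num_mono[OF cK assms(10)])
  qed
  have eq: "cover_num L \<rho> = cover_num (K n) \<rho>" if "n > 0" "n \<ge> m" for n
  proof -
    have "K n \<subseteq> (\<Union>c\<in>C. ball c \<rho>)" using mono[OF that(2)] m by blast
    then have "cover_num (K n) \<rho> \<le> card C" unfolding cover_num_def
      using C(1) by (intro cInf_lower) auto
    then show ?thesis using le[OF that(1)] C(3) by simp
  qed
  have inf: "cover_num L \<rho> = (INF n\<in>{0<..}. cover_num (K n) \<rho>)"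
  proof (rule antisym)
    show "cover_num L \<rho> \<le> (INF n\<in>{0<..}. cover_num (K n) \<rho>)"
      by (rule cINF_greatest) (auto intro: le)
    have "(INF n\<in>{0<..}. cover_num (K n) \<rho>) \<le> cover_num (K (Suc m)) \<rho>"
      by (rule cINF_lower) auto
    then show "(INF n\<in>{0<..}. cover_num (K n) \<rho>) \<le> cover_num L \<rho>" using eq[of "Suc m"] by simp
  qed
  show ?thesis
    unfolding L_def[symmetric] K_def[symmetric]
    using inf eq by (intro conjI exI[of _ "Suc m"]) auto
qed

end
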